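(* Let $n\geq 4$ and let $F_n=\{0,a_1,\ldots,a_{n-2},1\}$ be the meet-semilattice of order $n$ with least element $0$, greatest element $1$, and $a_1,\ldots,a_{n-2}$ pairwise incomparable. Write $a_0=0$ and $a_{n-1}=1$. Then for each $i\in\{1,\ldots,n-2\}$, \[ \mathrm{cov}_1(a_i)=\{xa_j=xa_k\mid j,k\in\{0,1,\ldots,n-2\}\setminus\{i\}\}\cup\{xa_j=xa_k\mid j,k\in\{i,n-1\}\}, \] and $|\mathrm{cov}_1(a_i)|=(n-2)^2+4$.
   Context: The meet is written as multiplication. An equation of the first kind in one variable $x$ over a semilattice $S$ is a formal expression $xa=xa'$ with $a,a'\in S$; formally it is the ordered pair $(a,a')$. An element $s$ satisfies $xa=xa'$ if $sa=sa'$. $\mathrm{cov}_1(s)$ is the set of equations of this form satisfied by $s$. *)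

theory Defs
  imports Main
begin

text \<open>Equations of the first kind in one variable over a semilattice with carrier S
and meet m: an equation x a = x a' is the ordered pair (a, a').
cov1 s is the set of such equations satisfied by s.\<close>

definition cov1 :: "'a set \<Rightarrow> ('a \<Rightarrow> 'a \<Rightarrow> 'a) \<Rightarrow> 'a \<Rightarrow> ('a \<times> 'a) set" where
  "cov1 S m s = {(a, a'). a \<in> S \<and> a' \<in> S \<and> m s a = m s a'}"

text \<open>The semilattice F_n = {a_0 = 0, a_1, ..., a_(n-2), a_(n-1) = 1}; element a_j is
encoded by its index j, so the carrier is {0..<n}.\<close>

definition F_carrier :: "nat \<Rightarrow> nat set" where
  "F_carrier n = {0..<n}"

definition F_meet :: "nat \<Rightarrow> nat \<Rightarrow> nat \<Rightarrow> nat" where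
  "F_meet n j k = (if j = k then j else if j = n - 1 then k else if k = n - 1 then j else 0)"

end

theory Submission
  imports Defs
begin

theorem lemma4:
  fixes n i :: nat
  assumes "n \<ge> 4" and "1 \<le> i" and "i \<le> n - 2"
  shows "(cov1 (F_carrier n) (F_meet n) i =
           {(j, k). j \<in> {0..n-2} - {i} \<and> k \<in> {0..n-2} - {i}}
           \<union> {(j, k). j \<in> {i, n-1} \<and> k \<in> {i, n-1}})
         \<and> card (cov1 (F_carrier n) (F_meet n) i) = (n - 2)^2 + 4"
proof -
  let ?X = "{0..n-2} - {i}" and ?Y = "{i, n-1}"
  have eq: "cov1 (F_carrier n) (F_meet n) i =
           {(j, k). j \<in> ?X \<and> k \<in> ?X} \<union> {(j, k). j \<in> ?Y \<and> k \<in> ?Y}"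
  proof (rule set_eqI, clarify)
    fix j k
    show "((j,k) \<in> cov1 (F_carrier n) (F_meet n) i) =
      ((j,k) \<in> {(j, k). j \<in> ?X \<and> k \<in> ?X} \<union> {(j, k). j \<in> ?Y \<and> k \<in> ?Y})"
      using assms unfolding cov1_def F_carrier_def F_meet_def
      by (cases "j = i"; cases "k = i"; cases "j = n-1"; cases "k = n-1"; simp; linarith?)
  qed
  have A: "{(j, k). j \<in> ?X \<and> k \<in> ?X} = ?X \<times> ?X" by auto
  have B: "{(j, k). j \<in> ?Y \<and> k \<in> ?Y} = ?Y \<times> ?Y" by auto
  have cX: "card ?X = n - 2" using assms by simp
  have cY: "card ?Y = 2" using assms by simp
  have disj: "(?X \<times> ?X) \<inter> (?Y \<times> ?Y) = {}" using assms by auto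
  have "card (?X \<times> ?X \<union> ?Y \<times> ?Y) = card (?X \<times> ?X) + card (?Y \<times> ?Y)"
    by (rule card_Un_disjoint) (use disj in auto)
  also have "\<dots> = (n-2)^2 + 4"
    unfolding card_cartesian_product cX cY by (simp add: power2_eq_square)
  finally show ?thesis using eq A B by simp
qed

end
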